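(* Let $G$ be a non-abelian finite simple group such that $\mathrm{Aut}(G)$ is a split extension of $\mathrm{Inn}(G)$ by a group of order $2$. Then $G$ has the eigenvalue one property.
   Context: A finite group $K$ has the eigenvalue one property if for every irreducible non-trivial $\mathbb{R}K$-module $W$ of odd dimension, affording $\sigma\colon K\to\mathrm{GL}(W)$, and every $m\in N_{\mathrm{GL}(W)}(\sigma(K))$ of finite order, there is $k\in K$ such that $\sigma(k)m$ has eigenvalue $1$. *)

theory Defs
  imports "HOL-Analysis.Analysis" "HOL-Algebra.Algebra"
begin

definition Inn :: "('a, 'b) monoid_scheme \<Rightarrow> ('a \<Rightarrow> 'a) set" where
  "Inn G = {(\<lambda>x\<in>carrier G. g \<otimes>\<^bsub>G\<^esub> x \<otimes>\<^bsub>G\<^esub> inv\<^bsub>G\<^esub> g) | g. g \<in> carrier G}"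

definition split_extension_by_order ::
    "('c, 'd) monoid_scheme \<Rightarrow> 'c set \<Rightarrow> nat \<Rightarrow> bool" where
  "split_extension_by_order A N q \<longleftrightarrow>
     N \<lhd> A \<and>
     (\<exists>C. subgroup C A \<and> finite C \<and> card C = q \<and> N \<inter> C = {\<one>\<^bsub>A\<^esub>}
          \<and> N <#>\<^bsub>A\<^esub> C = carrier A)"

definition mat_pow :: "real^'n^'n \<Rightarrow> nat \<Rightarrow> real^'n^'n" where
  "mat_pow m r = (((**) m) ^^ r) (mat 1)"

definition real_rep :: "('g, 'b) monoid_scheme \<Rightarrow> ('g \<Rightarrow> real^'n^'n) \<Rightarrow> bool" where
  "real_rep K \<sigma> \<longleftrightarrow>
     (\<forall>x\<in>carrier K. \<forall>y\<in>carrier K. \<sigma> (x \<otimes>\<^bsub>K\<^esub> y) = \<sigma> x ** \<sigma> y) \<and>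
     \<sigma> \<one>\<^bsub>K\<^esub> = mat 1"

definition irreducible_rep :: "('g, 'b) monoid_scheme \<Rightarrow> ('g \<Rightarrow> real^'n^'n) \<Rightarrow> bool" where
  "irreducible_rep K \<sigma> \<longleftrightarrow> real_rep K \<sigma> \<and>
     (\<forall>U. subspace U \<and> (\<forall>k\<in>carrier K. \<forall>u\<in>U. \<sigma> k *v u \<in> U)
          \<longrightarrow> U = {0} \<or> U = UNIV)"

definition nontrivial_rep :: "('g, 'b) monoid_scheme \<Rightarrow> ('g \<Rightarrow> real^'n^'n) \<Rightarrow> bool" where
  "nontrivial_rep K \<sigma> \<longleftrightarrow> (\<exists>k\<in>carrier K. \<sigma> k \<noteq> mat 1)"

definition in_GL_normalizer :: "('g, 'b) monoid_scheme \<Rightarrow> ('g \<Rightarrow> real^'n^'n) \<Rightarrow> real^'n^'n \<Rightarrow> bool" where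
  "in_GL_normalizer K \<sigma> m \<longleftrightarrow> invertible m \<and>
     (\<lambda>a. m ** a ** matrix_inv m) ` (\<sigma> ` carrier K) = \<sigma> ` carrier K"

definition finite_order_mat :: "real^'n^'n \<Rightarrow> bool" where
  "finite_order_mat m \<longleftrightarrow> (\<exists>r>0. mat_pow m r = mat 1)"

definition has_eigenvalue_one :: "real^'n^'n \<Rightarrow> bool" where
  "has_eigenvalue_one A \<longleftrightarrow> (\<exists>v. v \<noteq> 0 \<and> A *v v = v)"

text \<open>The eigenvalue one property, restricted to modules W = real^'n (the dimension is
  CARD('n)); the full property is this for every finite type 'n.\<close>
definition eigenvalue_one_property_dim ::
    "('n::finite) itself \<Rightarrow> ('g, 'b) monoid_scheme \<Rightarrow> bool" where
  "eigenvalue_one_property_dim _ K \<longleftrightarrow>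
     (\<forall>(\<sigma>::'g \<Rightarrow> real^('n::finite)^'n) (m::real^'n^'n).
        odd CARD('n) \<and> irreducible_rep K \<sigma> \<and> nontrivial_rep K \<sigma> \<and>
        in_GL_normalizer K \<sigma> m \<and> finite_order_mat m
        \<longrightarrow> (\<exists>k\<in>carrier K. has_eigenvalue_one (\<sigma> k ** m)))"

end

theory Submission
  imports Defs
begin


lemma det_scaleR_real:
  fixes A :: "real^'n^'n"
  shows "det (c *\<^sub>R A) = c ^ CARD('n) * det A"
proof -
  have "\<And>p. (\<Prod>i\<in>UNIV. (c *\<^sub>R A)$i$p i) = c ^ CARD('n) * (\<Prod>i\<in>UNIV. A$i$p i)"
    by (simp add: prod.distrib)
  then show ?thesis unfolding det_def by (simp add: sum_distrib_left algebra_simps)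
qed

lemma cont_det_line:
  fixes P Q :: "real^'n^'n"
  shows "continuous_on S (\<lambda>s::real. det (P + s *\<^sub>R Q))"
  unfolding det_def by (intro continuous_intros) 

lemma det_pos_large:
  fixes B :: "real^'n^'n"
  shows "\<exists>T>0. \<forall>t\<ge>T. det (t *\<^sub>R mat 1 + B) > 0"
proof -
  have c: "continuous (at 0) (\<lambda>s::real. det (mat 1 + s *\<^sub>R B))"
    using cont_det_line[of UNIV "mat 1" B] by (simp add: continuous_on_eq_continuous_at)
  have "det (mat 1 + (0::real) *\<^sub>R B) = 1" by simp
  moreover have "\<forall>\<epsilon>>0. \<exists>\<delta>>0. \<forall>x'. dist x' 0 < \<delta> \<longrightarrow>
     dist (det (mat 1 + x' *\<^sub>R B)) (det (mat 1 + (0::real) *\<^sub>R B)) < \<epsilon>"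
    using c unfolding continuous_at_eps_delta by blast
  ultimately obtain e where e: "e > 0" "\<And>s. dist s 0 < e \<Longrightarrow> dist (det (mat 1 + s *\<^sub>R B)) 1 < 1/2"
    by (metis (no_types, lifting) zero_less_divide_iff zero_less_numeral zero_less_one)
  define T where "T = 2 / e"
  have "T > 0" using e by (simp add: T_def)
  moreover have "det (t *\<^sub>R mat 1 + B) > 0" if "t \<ge> T" for t
  proof -
    have t: "t > 0" using that \<open>T>0\<close> by simp
    have "1/t \<le> 1/T" using t that \<open>T>0\<close> by (simp add: frac_le)
    also have "1/T = e/2" unfolding T_def by simp
    finally have "1/t < e" using e by linarith
    then have "dist (det (mat 1 + (1/t) *\<^sub>R B)) 1 < 1/2" using e t by simp
    then have p: "det (mat 1 + (1/t) *\<^sub>R B) > 0" unfolding dist_real_def by (simp add: abs_if split: if_splits)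
    have "t *\<^sub>R mat 1 + B = t *\<^sub>R (mat 1 + (1/t) *\<^sub>R B)" using t by (simp add: algebra_simps)
    then have "det (t *\<^sub>R mat 1 + B) = t ^ CARD('n) * det (mat 1 + (1/t) *\<^sub>R B)"
      by (simp add: det_scaleR_real)
    then show ?thesis using p t by simp
  qed
  ultimately show ?thesis by blast
qed

lemma odd_real_eigen:
  fixes A :: "real^'n^'n"
  assumes "odd CARD('n)"
  shows "\<exists>c v. v \<noteq> 0 \<and> A *v v = c *\<^sub>R v"
proof -
  obtain T1 where T1: "T1 > 0" "\<And>t. t \<ge> T1 \<Longrightarrow> det (t *\<^sub>R mat 1 + A) > 0"
    using det_pos_large by blast
  obtain T2 where T2: "T2 > 0" "\<And>t. t \<ge> T2 \<Longrightarrow> det (t *\<^sub>R mat 1 + (-A)) > 0"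
    using det_pos_large by blast
  define T where "T = max T1 T2"
  define f where "f = (\<lambda>s::real. det (A + s *\<^sub>R (- mat 1)))"
  have e1: "A + (-T) *\<^sub>R (- mat 1) = T *\<^sub>R mat 1 + A" by (simp add: algebra_simps)
  have "f (-T) = det (T *\<^sub>R mat 1 + A)" unfolding f_def e1 ..
  then have f1: "f (-T) > 0" using T1(2)[of T] unfolding T_def by simp
  have e2: "A + T *\<^sub>R (- mat 1) = (-1) *\<^sub>R (T *\<^sub>R mat 1 + (-A))" by (simp add: algebra_simps)
  have "f T = (-1) ^ CARD('n) * det (T *\<^sub>R mat 1 + (-A))" unfolding f_def e2
    by (rule det_scaleR_real)
  then have f2: "f T < 0" using T2(2)[of T] assms unfolding T_def by simp
  have "continuous_on {-T..T} f" unfolding f_def by (rule cont_det_line)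
  moreover have "-T \<le> T" using T1 unfolding T_def by simp
  ultimately have "\<exists>x\<ge>-T. x \<le> T \<and> f x = 0"
    using IVT2'[of f T 0 "-T"] f1 f2 by (meson less_imp_le)
  then obtain c where "f c = 0" by blast
  then have "\<not> invertible (A + c *\<^sub>R (- mat 1))" unfolding f_def by (simp add: invertible_det_nz)
  then obtain v where v: "v \<noteq> 0" "(A + c *\<^sub>R (- mat 1)) *v v = 0"
    using matrix_left_invertible_ker invertible_left_inverse by blast
  have "(A + c *\<^sub>R (- mat 1)) *v v = A *v v - c *\<^sub>R v"
    by (simp add: algebra_simps scaleR_matrix_vector_assoc[symmetric])
  then show ?thesis using v by auto
qed



lemma rep_inv:
  fixes G (structure)
  assumes "group G" "real_rep G \<sigma>" "x \<in> carrier G"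
  shows "\<sigma> x ** \<sigma> (inv\<^bsub>G\<^esub> x) = mat 1" "\<sigma> (inv\<^bsub>G\<^esub> x) ** \<sigma> x = mat 1"
proof -
  interpret group G by fact
  have h: "\<forall>x\<in>carrier G. \<forall>y\<in>carrier G. \<sigma> (x \<otimes> y) = \<sigma> x ** \<sigma> y" "\<sigma> \<one> = mat 1"
    using assms(2) unfolding real_rep_def by auto
  show "\<sigma> x ** \<sigma> (inv x) = mat 1" using h assms(3) by (metis inv_closed r_inv)
  show "\<sigma> (inv x) ** \<sigma> x = mat 1" using h assms(3) by (metis inv_closed l_inv)
qed

lemma rep_mult:
  assumes "real_rep G \<sigma>" "x \<in> carrier G" "y \<in> carrier G"
  shows "\<sigma> (x \<otimes>\<^bsub>G\<^esub> y) = \<sigma> x ** \<sigma> y"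
  using assms unfolding real_rep_def by auto

lemma rep_one:
  assumes "real_rep G \<sigma>"
  shows "\<sigma> \<one>\<^bsub>G\<^esub> = mat 1"
  using assms unfolding real_rep_def by auto

lemma mat_pow_Suc: "mat_pow m (Suc r) = m ** mat_pow m r"
  unfolding mat_pow_def by simp

lemma mat_pow_0: "mat_pow m 0 = mat 1"
  unfolding mat_pow_def by simp

lemma det_mat_pow: "det (mat_pow m r) = det m ^ r"
  by (induction r) (simp_all add: mat_pow_Suc mat_pow_0 det_mul)

lemma rep_pow:
  fixes G (structure)
  assumes "group G" "real_rep G \<sigma>" "x \<in> carrier G"
  shows "\<sigma> (x [^]\<^bsub>G\<^esub> (r::nat)) = mat_pow (\<sigma> x) r"
proof (induction r)
  case 0
  then show ?case using rep_one[OF assms(2)] by (simp add: mat_pow_0)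
next
  case (Suc r)
  interpret group G by fact
  have "\<sigma> (x [^] Suc r) = \<sigma> (x \<otimes> x [^] r)" using assms(3) nat_pow_Suc2 by simp
  also have "\<dots> = \<sigma> x ** \<sigma> (x [^] r)" using rep_mult[OF assms(2)] assms(3) by simp
  finally show ?case using Suc by (simp add: mat_pow_Suc)
qed

lemma abs_det_one_of_pow:
  fixes m :: "real^'n^'n"
  assumes "mat_pow m r = mat 1" "r > 0"
  shows "\<bar>det m\<bar> = 1"
proof -
  have "det m ^ r = 1" using assms det_mat_pow[of m r] by simp
  then have "\<bar>det m\<bar> ^ r = 1 ^ r" by (metis abs_one power_abs power_one)
  then show ?thesis using assms(2) by (meson abs_ge_zero power_eq_imp_eq_base zero_le_one)
qed

lemma rep_abs_det:
  fixes G (structure)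
  assumes "group G" "finite (carrier G)" "real_rep G \<sigma>" "x \<in> carrier G"
  shows "\<bar>det (\<sigma> x)\<bar> = 1"
proof -
  interpret group G by fact
  have "\<sigma> (x [^] order G) = mat 1" using assms pow_order_eq_1 rep_one by metis
  then have "mat_pow (\<sigma> x) (order G) = mat 1" using rep_pow[OF assms(1,3,4)] by simp
  moreover have "order G > 0" using assms(2) one_closed unfolding order_def
    by (auto simp add: card_gt_0_iff)
  ultimately show ?thesis by (rule abs_det_one_of_pow)
qed

lemma schur_real:
  fixes \<sigma> :: "'g \<Rightarrow> real^'n^'n"
  assumes "odd CARD('n)" "irreducible_rep K \<sigma>"
    and comm: "\<And>k. k \<in> carrier K \<Longrightarrow> A ** \<sigma> k = \<sigma> k ** A"
  shows "\<exists>c. A = c *\<^sub>R mat 1"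
proof -
  obtain c v where v: "v \<noteq> 0" "A *v v = c *\<^sub>R v" using odd_real_eigen[OF assms(1)] by blast
  define U where "U = {x. A *v x = c *\<^sub>R x}"
  have "subspace U" unfolding subspace_def U_def
    by (simp add: algebra_simps matrix_vector_mult_scaleR)
  moreover have "\<forall>k\<in>carrier K. \<forall>u\<in>U. \<sigma> k *v u \<in> U"
  proof (intro ballI)
    fix k u assume k: "k \<in> carrier K" and u: "u \<in> U"
    have "A *v (\<sigma> k *v u) = (A ** \<sigma> k) *v u" by (simp add: matrix_vector_mul_assoc)
    also have "\<dots> = \<sigma> k *v (A *v u)" using comm[OF k] by (simp add: matrix_vector_mul_assoc)
    also have "\<dots> = c *\<^sub>R (\<sigma> k *v u)" using u unfolding U_def by (simp add: matrix_vector_mult_scaleR)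
    finally show "\<sigma> k *v u \<in> U" unfolding U_def by simp
  qed
  ultimately have "U = {0} \<or> U = UNIV" using assms(2) unfolding irreducible_rep_def by blast
  moreover have "v \<in> U" using v unfolding U_def by simp
  ultimately have "U = UNIV" using v by auto
  then have "\<forall>x. A *v x = (c *\<^sub>R mat 1) *v x" unfolding U_def
    by (auto simp: scaleR_matrix_vector_assoc[symmetric])
  then show ?thesis using matrix_eq by blast
qed

lemma rep_faithful:
  fixes G (structure)
  assumes "simple_group G" "real_rep G \<sigma>" "nontrivial_rep G \<sigma>"
  shows "inj_on \<sigma> (carrier G)"
proof -
  interpret simple_group G by fact
  define N where "N = {x \<in> carrier G. \<sigma> x = mat 1}"
  have sg: "subgroup N G"
  proof (rule subgroupI)
    show "N \<subseteq> carrier G" unfolding N_def by auto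
    show "N \<noteq> {}" using rep_one[OF assms(2)] unfolding N_def by auto
    show "inv a \<in> N" if "a \<in> N" for a
      using that rep_inv[OF is_group assms(2), of a] unfolding N_def by auto
    show "a \<otimes> b \<in> N" if "a \<in> N" "b \<in> N" for a b
      using that rep_mult[OF assms(2), of a b] unfolding N_def by auto
  qed
  have "N \<lhd> G" unfolding normal_inv_iff
  proof (intro conjI sg ballI)
    fix x h assume x: "x \<in> carrier G" and h: "h \<in> N"
    have "\<sigma> (x \<otimes> h \<otimes> inv x) = \<sigma> x ** \<sigma> h ** \<sigma> (inv x)"
      using x h rep_mult[OF assms(2)] unfolding N_def by auto
    also have "\<dots> = mat 1" using h rep_inv[OF is_group assms(2) x] unfolding N_def by simp
    finally show "x \<otimes> h \<otimes> inv x \<in> N" using x h unfolding N_def by auto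
  qed
  then have "N = carrier G \<or> N = {\<one>}" by (rule no_real_normal_subgroup)
  moreover have "N \<noteq> carrier G" using assms(3) unfolding nontrivial_rep_def N_def by auto
  ultimately have N1: "N = {\<one>}" by simp
  show ?thesis
  proof (rule inj_onI)
    fix x y assume x: "x \<in> carrier G" and y: "y \<in> carrier G" and e: "\<sigma> x = \<sigma> y"
    have "\<sigma> (x \<otimes> inv y) = mat 1"
      using e rep_mult[OF assms(2) x] rep_inv[OF is_group assms(2) y] y by simp
    then have "x \<otimes> inv y \<in> N" using x y unfolding N_def by simp
    then have "x \<otimes> inv y = \<one>" using N1 by simp
    moreover have "x = (x \<otimes> inv y) \<otimes> y" using x y by (simp add: m_assoc)
    ultimately show "x = y" using y by simp
  qed
qed



lemma matrix_add_rdistrib': "((B + C) ** (A::real^'n^'n)) = (B ** A) + (C ** A)"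
  by (vector matrix_matrix_mult_def sum.distrib[symmetric] field_simps)

lemma msum_left:
  fixes B :: "real^'n^'n"
  shows "(\<Sum>g\<in>S. F g) ** B = (\<Sum>g\<in>S. F g ** B)"
  by (induction S rule: infinite_finite_induct) (simp_all add: matrix_add_rdistrib')

lemma msum_right:
  fixes B :: "real^'n^'n"
  shows "B ** (\<Sum>g\<in>S. F g) = (\<Sum>g\<in>S. B ** F g)"
  by (induction S rule: infinite_finite_induct) (simp_all add: matrix_add_ldistrib)

lemma msum_vec:
  fixes x :: "real^'n"
  shows "(\<Sum>g\<in>S. F g) *v x = (\<Sum>g\<in>S. F g *v x)"
  by (induction S rule: infinite_finite_induct) (simp_all add: matrix_vector_mult_add_rdistrib)

lemma trace_sum:
  fixes F :: "'a \<Rightarrow> real^'n^'n"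
  shows "trace (\<Sum>g\<in>S. F g) = (\<Sum>g\<in>S. trace (F g))"
  unfolding trace_def by (simp add: sum.swap[of _ S])

lemma trace_scaleR_one: "trace (c *\<^sub>R (mat 1 :: real^'n^'n)) = c * real CARD('n)"
  unfolding trace_def by (simp add: mat_def)

definition Emat :: "'n \<Rightarrow> 'n \<Rightarrow> real^'n^'n" where
  "Emat j k = (\<chi> a b. if a = j \<and> b = k then 1 else 0)"

lemma Emat_entry:
  fixes A B :: "real^'n^'n"
  shows "(A ** Emat j k ** B)$i$l = A$i$j * B$k$l"
proof -
  have "(A ** Emat j k)$i$b = (if b = k then A$i$j else 0)" for b
    unfolding matrix_matrix_mult_def Emat_def
    by (simp add: if_distrib[of "\<lambda>x. _ * x"] sum.delta' cong: if_cong)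
  then have "(\<Sum>b\<in>UNIV. (A ** Emat j k)$i$b * B$b$l) = (\<Sum>b\<in>UNIV. if b = k then A$i$j * B$b$l else 0)"
    by (intro sum.cong) auto
  also have "\<dots> = A$i$j * B$k$l" by (simp add: sum.delta')
  finally show ?thesis
    unfolding matrix_matrix_mult_def[of "A ** Emat j k"] by simp
qed

lemma trace_Emat: "trace (Emat j k) = (if j = k then 1 else 0)"
  unfolding trace_def Emat_def by (cases "j = k") (auto simp: sum.delta intro!: sum.neutral)

lemma matrix_inv_both:
  fixes A :: "real^'n^'n"
  assumes "invertible A"
  shows "A ** matrix_inv A = mat 1" "matrix_inv A ** A = mat 1"
proof -
  have "\<exists>A'. A ** A' = mat 1 \<and> A' ** A = mat 1" using assms unfolding invertible_def by blast
  then have "A ** matrix_inv A = mat 1 \<and> matrix_inv A ** A = mat 1"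
    unfolding matrix_inv_def by (rule someI_ex)
  then show "A ** matrix_inv A = mat 1" "matrix_inv A ** A = mat 1" by auto
qed

lemma quad_transpose:
  fixes A :: "real^'n^'n"
  shows "inner x ((transpose A ** A) *v x) = inner (A *v x) (A *v x)"
proof -
  have "(transpose A ** A) *v x = (A *v x) v* A"
    by (simp add: matrix_vector_mul_assoc[symmetric])
  moreover have "inner x ((A *v x) v* A) = inner ((A *v x) v* A) x" by (rule inner_commute)
  moreover have "\<dots> = inner (A *v x) (A *v x)" by (rule dot_lmul_matrix)
  ultimately show ?thesis by simp
qed

lemma eig_neg_one_of_involution:
  fixes T :: "real^'n^'n"
  assumes "T ** T = mat 1" "T \<noteq> mat 1"
  shows "\<exists>w. w \<noteq> 0 \<and> T *v w = - w"
proof -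
  obtain x where x: "T *v x \<noteq> x" using assms(2) matrix_eq[of T "mat 1"] by auto
  define w where "w = T *v x - x"
  have "T *v w = (T ** T) *v x - T *v x" unfolding w_def
    by (simp add: matrix_vector_mult_diff_distrib matrix_vector_mul_assoc)
  then have "T *v w = - w" using assms(1) unfolding w_def by simp
  moreover have "w \<noteq> 0" using x unfolding w_def by simp
  ultimately show ?thesis by blast
qed

lemma neg_mat_vec: "(- mat 1 :: real^'n^'n) *v x = - x"
proof -
  have "(0 - mat 1 :: real^'n^'n) *v x = 0 *v x - mat 1 *v x" by (rule matrix_vector_mult_diff_rdistrib)
  then show ?thesis by simp
qed

lemma eig_one_of_involution:
  fixes T :: "real^'n^'n"
  assumes "T ** T = mat 1" "T \<noteq> (-1) *\<^sub>R mat 1"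
  shows "\<exists>w. w \<noteq> 0 \<and> T *v w = w"
proof -
  obtain x where x: "T *v x \<noteq> - x" using assms(2) matrix_eq[of T "(-1) *\<^sub>R mat 1"]
    by (auto simp: neg_mat_vec)
  define w where "w = T *v x + x"
  have "T *v w = (T ** T) *v x + T *v x" unfolding w_def
    by (simp add: matrix_vector_right_distrib matrix_vector_mul_assoc)
  then have "T *v w = w" using assms(1) unfolding w_def by simp
  moreover have "w \<noteq> 0" using x unfolding w_def by (metis add_eq_0_iff minus_minus)
  ultimately show ?thesis by blast
qed



locale fsctx = simple_group G for G :: "('g, 'b) monoid_scheme" (structure) +
  fixes \<sigma> :: "'g \<Rightarrow> real^'n^'n"
  assumes fin: "finite (carrier G)" and oddn: "odd CARD('n)"
    and irr: "irreducible_rep G \<sigma>" and nontriv: "nontrivial_rep G \<sigma>"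
begin

lemma rep: "real_rep G \<sigma>" using irr unfolding irreducible_rep_def by simp

lemma sinj: "inj_on \<sigma> (carrier G)"
  using rep_faithful[OF is_simple_group rep nontriv] .

lemma smult: "x \<in> carrier G \<Longrightarrow> y \<in> carrier G \<Longrightarrow> \<sigma> (x \<otimes> y) = \<sigma> x ** \<sigma> y"
  using rep_mult[OF rep] by simp

lemma sone: "\<sigma> \<one> = mat 1" using rep_one[OF rep] .

lemma sinv: "x \<in> carrier G \<Longrightarrow> \<sigma> x ** \<sigma> (inv x) = mat 1" "x \<in> carrier G \<Longrightarrow> \<sigma> (inv x) ** \<sigma> x = mat 1"
  using rep_inv[OF is_group rep] by auto

lemma schur: "(\<And>k. k \<in> carrier G \<Longrightarrow> A ** \<sigma> k = \<sigma> k ** A) \<Longrightarrow> \<exists>c. A = c *\<^sub>R mat 1"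
  using schur_real[OF oddn irr] by blast

lemma sum_lmult:
  assumes "h \<in> carrier G"
  shows "(\<Sum>g\<in>carrier G. F (h \<otimes> g)) = (\<Sum>g\<in>carrier G. (F g :: 'z::comm_monoid_add))"
proof (rule sum.reindex_bij_witness[where i = "\<lambda>g. inv h \<otimes> g" and j = "\<lambda>g. h \<otimes> g"])
qed (use assms in \<open>auto simp: m_assoc[symmetric]\<close>)

lemma sum_rmult:
  assumes "h \<in> carrier G"
  shows "(\<Sum>g\<in>carrier G. F (g \<otimes> h)) = (\<Sum>g\<in>carrier G. (F g :: 'z::comm_monoid_add))"
proof (rule sum.reindex_bij_witness[where i = "\<lambda>g. g \<otimes> inv h" and j = "\<lambda>g. g \<otimes> h"])
qed (use assms in \<open>auto simp: m_assoc\<close>)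

lemma npos: "real CARD('n) > 0" by simp

abbreviation "NN \<equiv> real (order G)"

lemma schur_rel:
  "(\<Sum>g\<in>carrier G. \<sigma> g ** Q ** \<sigma> (inv g)) = (NN * trace Q / real CARD('n)) *\<^sub>R mat 1"
proof -
  define T where "T = (\<Sum>g\<in>carrier G. \<sigma> g ** Q ** \<sigma> (inv g))"
  have "T ** \<sigma> h = \<sigma> h ** T" if h: "h \<in> carrier G" for h
  proof -
    have "\<sigma> h ** T = (\<Sum>g\<in>carrier G. \<sigma> (h \<otimes> g) ** Q ** \<sigma> (inv g))"
      unfolding T_def msum_right using h by (intro sum.cong) (auto simp: smult matrix_mul_assoc)
    also have "\<dots> = (\<Sum>g\<in>carrier G. (\<lambda>g. \<sigma> g ** Q ** \<sigma> (inv g \<otimes> h)) (h \<otimes> g))"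
      using h by (intro sum.cong) (auto simp: inv_mult_group m_assoc)
    also have "\<dots> = (\<Sum>g\<in>carrier G. \<sigma> g ** Q ** \<sigma> (inv g \<otimes> h))"
      by (rule sum_lmult[OF h])
    also have "\<dots> = T ** \<sigma> h"
      unfolding T_def msum_left using h by (intro sum.cong) (auto simp: smult matrix_mul_assoc)
    finally show ?thesis by simp
  qed
  then obtain c where c: "T = c *\<^sub>R mat 1" using schur by blast
  have "trace T = (\<Sum>g\<in>carrier G. trace (\<sigma> g ** Q ** \<sigma> (inv g)))" unfolding T_def trace_sum ..
  also have "\<dots> = (\<Sum>g\<in>carrier G. trace Q)"
  proof (intro sum.cong refl)
    fix g assume g: "g \<in> carrier G"
    have "trace (\<sigma> g ** Q ** \<sigma> (inv g)) = trace (\<sigma> (inv g) ** (\<sigma> g ** Q))" by (rule trace_mul_sym)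
    also have "\<dots> = trace Q" using sinv(2)[OF g] by (simp add: matrix_mul_assoc)
    finally show "trace (\<sigma> g ** Q ** \<sigma> (inv g)) = trace Q" .
  qed
  also have "\<dots> = NN * trace Q" by (simp add: order_def)
  moreover have "trace T = c * real CARD('n)" using c trace_scaleR_one[where 'n='n] by simp
  ultimately have "c * real CARD('n) = NN * trace Q" by simp
  then have "c = NN * trace Q / real CARD('n)" using npos by (simp add: field_simps)
  then show ?thesis using c T_def by simp
qed

lemma schur_entry:
  "(\<Sum>g\<in>carrier G. (\<sigma> g)$i$j * (\<sigma> (inv g))$k$l) = (if j = k \<and> i = l then NN / real CARD('n) else 0)"
proof -
  have "(\<Sum>g\<in>carrier G. (\<sigma> g)$i$j * (\<sigma> (inv g))$k$l) = (\<Sum>g\<in>carrier G. \<sigma> g ** Emat j k ** \<sigma> (inv g))$i$l"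
    by (simp add: Emat_entry)
  also have "\<dots> = ((NN * trace (Emat j k) / real CARD('n)) *\<^sub>R (mat 1 :: real^'n^'n))$i$l"
    unfolding schur_rel ..
  also have "\<dots> = (if j = k \<and> i = l then NN / real CARD('n) else 0)"
    by (simp add: trace_Emat mat_def)
  finally show ?thesis .
qed

definition "Mm = (\<Sum>g\<in>carrier G. transpose (\<sigma> g) ** \<sigma> g)"

lemma Mm_sym: "Mm$i$j = Mm$j$i"
  unfolding Mm_def by (simp add: matrix_matrix_mult_def transpose_def mult.commute)

lemma Mm_inj: "Mm *v x = 0 \<Longrightarrow> x = 0"
proof -
  assume x: "Mm *v x = 0"
  have "inner x (Mm *v x) = (\<Sum>g\<in>carrier G. inner (\<sigma> g *v x) (\<sigma> g *v x))"
    unfolding Mm_def msum_vec inner_sum_right quad_transpose ..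
  also have "\<dots> \<ge> inner (\<sigma> \<one> *v x) (\<sigma> \<one> *v x)"
    by (rule member_le_sum) (use fin in auto)
  finally have "inner x x \<le> 0" using x sone by simp
  then show "x = 0" by (metis inner_gt_zero_iff not_le)
qed

lemma Mm_invertible: "invertible Mm"
  using Mm_inj matrix_left_invertible_ker invertible_left_inverse by blast

definition "Mi = matrix_inv Mm"

lemma Mm_Mi: "Mm ** Mi = mat 1" "Mi ** Mm = mat 1"
  using matrix_inv_both[OF Mm_invertible] unfolding Mi_def by auto

lemma Mm_invar:
  assumes h: "h \<in> carrier G"
  shows "transpose (\<sigma> h) ** Mm ** \<sigma> h = Mm"
proof -
  have "transpose (\<sigma> h) ** Mm ** \<sigma> h = (\<Sum>g\<in>carrier G. transpose (\<sigma> h) ** (transpose (\<sigma> g) ** \<sigma> g) ** \<sigma> h)"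
    unfolding Mm_def msum_left msum_right ..
  also have "\<dots> = (\<Sum>g\<in>carrier G. (\<lambda>g. transpose (\<sigma> g) ** \<sigma> g) (g \<otimes> h))"
    using h by (intro sum.cong) (auto simp: smult matrix_transpose_mul matrix_mul_assoc)
  also have "\<dots> = Mm" unfolding Mm_def by (rule sum_rmult[OF h])
  finally show ?thesis .
qed

lemma transpose_sigma:
  assumes g: "g \<in> carrier G"
  shows "transpose (\<sigma> g) = Mm ** \<sigma> (inv g) ** Mi"
proof -
  have "transpose (\<sigma> g) ** Mm = transpose (\<sigma> g) ** Mm ** (\<sigma> g ** \<sigma> (inv g))"
    using sinv(1)[OF g] by simp
  also have "\<dots> = Mm ** \<sigma> (inv g)" using Mm_invar[OF g] by (simp add: matrix_mul_assoc)
  finally have e: "transpose (\<sigma> g) ** Mm = Mm ** \<sigma> (inv g)" .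
  have "transpose (\<sigma> g) = transpose (\<sigma> g) ** Mm ** Mi" using Mm_Mi by (simp add: matrix_mul_assoc[symmetric])
  then show ?thesis using e by simp
qed

lemma sum_scaled_inv:
  "(\<Sum>g\<in>carrier G. (\<sigma> g)$i$j *\<^sub>R \<sigma> (inv g)) = (NN / real CARD('n)) *\<^sub>R Emat j i"
  by (simp add: vec_eq_iff schur_entry Emat_def)

lemma fs_entry:
  "(\<Sum>g\<in>carrier G. (\<sigma> g)$i$j * (transpose (\<sigma> g))$i$j) = (NN / real CARD('n)) * (Mm$i$j * Mi$i$j)"
proof -
  have "(\<Sum>g\<in>carrier G. (\<sigma> g)$i$j * (transpose (\<sigma> g))$i$j)
      = (\<Sum>g\<in>carrier G. (\<sigma> g)$i$j * (Mm ** \<sigma> (inv g) ** Mi)$i$j)"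
    by (intro sum.cong) (auto simp: transpose_sigma)
  also have "\<dots> = (\<Sum>g\<in>carrier G. (\<sigma> g)$i$j *\<^sub>R (Mm ** \<sigma> (inv g) ** Mi))$i$j"
    by simp
  also have "(\<Sum>g\<in>carrier G. (\<sigma> g)$i$j *\<^sub>R (Mm ** \<sigma> (inv g) ** Mi))
      = Mm ** (\<Sum>g\<in>carrier G. (\<sigma> g)$i$j *\<^sub>R \<sigma> (inv g)) ** Mi"
    unfolding msum_left msum_right by (simp add: matrix_scalar_ac scalar_matrix_assoc)
  also have "\<dots> = (NN / real CARD('n)) *\<^sub>R (Mm ** Emat j i ** Mi)"
    unfolding sum_scaled_inv by (simp add: matrix_scalar_ac scalar_matrix_assoc)
  finally show ?thesis by (simp add: Emat_entry)
qed

lemma fs_identity: "trace (\<Sum>g\<in>carrier G. \<sigma> g ** \<sigma> g) = NN"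
proof -
  have "trace (\<Sum>g\<in>carrier G. \<sigma> g ** \<sigma> g)
     = (\<Sum>g\<in>carrier G. \<Sum>i\<in>UNIV. \<Sum>j\<in>UNIV. (\<sigma> g)$i$j * (transpose (\<sigma> g))$i$j)"
    unfolding trace_sum by (simp add: trace_def matrix_matrix_mult_def transpose_def)
  also have "\<dots> = (\<Sum>i\<in>UNIV. \<Sum>j\<in>UNIV. \<Sum>g\<in>carrier G. (\<sigma> g)$i$j * (transpose (\<sigma> g))$i$j)"
    by (simp add: sum.swap[of _ "carrier G"])
  also have "\<dots> = (\<Sum>i\<in>UNIV. \<Sum>j\<in>UNIV. (NN / real CARD('n)) * (Mm$j$i * Mi$i$j))"
    by (simp add: fs_entry Mm_sym[of i j for i j])
  also have "\<dots> = (NN / real CARD('n)) * (\<Sum>i\<in>UNIV. \<Sum>j\<in>UNIV. Mm$j$i * Mi$i$j)"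
    by (simp add: sum_distrib_left)
  also have "(\<Sum>i\<in>UNIV. \<Sum>j\<in>UNIV. Mm$j$i * Mi$i$j) = (\<Sum>j\<in>UNIV. \<Sum>i\<in>UNIV. Mm$j$i * Mi$i$j)"
    by (rule sum.swap)
  also have "(\<Sum>j\<in>UNIV. \<Sum>i\<in>UNIV. Mm$j$i * Mi$i$j) = trace (Mm ** Mi)"
    unfolding trace_def matrix_matrix_mult_def by simp
  also have "\<dots> = real CARD('n)" using Mm_Mi trace_I by simp
  finally show ?thesis using npos by simp
qed

lemma order_pos: "order G > 0"
  using fin one_closed unfolding order_def by (auto simp: card_gt_0_iff)

lemma involution_exists: "\<exists>t\<in>carrier G. t \<noteq> \<one> \<and> t \<otimes> t = \<one>"
proof (rule ccontr)
  assume noinv: "\<not> (\<exists>t\<in>carrier G. t \<noteq> \<one> \<and> t \<otimes> t = \<one>)"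
  have oddG: "odd (order G)"
  proof
    assume "even (order G)"
    then have "order G = 2 ^ 1 * (order G div 2)" by simp
    from sylow_thm[OF _ is_group this fin] obtain H where H: "subgroup H G" "card H = 2"
      by auto
    have finH: "finite H" using H(2) card.infinite by fastforce
    have "H \<noteq> {\<one>}" using H(2) by auto
    moreover have one: "\<one> \<in> H" using subgroup.one_closed[OF H(1)] .
    ultimately obtain t where t: "t \<in> H" "t \<noteq> \<one>" by blast
    have tG: "t \<in> carrier G" using t subgroup.subset[OF H(1)] by blast
    have "{\<one>, t} \<subseteq> H" using one t by auto
    moreover have "card {\<one>, t} = card H" using H(2) t by simp
    ultimately have Heq: "{\<one>, t} = H" using finH card_subset_eq by metis
    have "t \<otimes> t \<in> H" using subgroup.m_closed[OF H(1) t(1) t(1)] .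
    then have "t \<otimes> t = \<one> \<or> t \<otimes> t = t" using Heq by auto
    moreover have "t \<otimes> t \<noteq> t"
    proof
      assume "t \<otimes> t = t"
      then have "t \<otimes> t = t \<otimes> \<one>" using tG by simp
      then have "t = \<one>" using tG l_cancel[of t t \<one>] by simp
      then show False using t by simp
    qed
    ultimately show False using noinv tG t by blast
  qed
  define k where "k = (order G + 1) div 2"
  have k2: "2 * k = order G + 1" using oddG unfolding k_def by presburger
  have pk: "a [^] (2 * k) = a" if a: "a \<in> carrier G" for a
  proof -
    have "a [^] (2 * k) = a [^] order G \<otimes> a [^] (1::nat)" unfolding k2 using a by (simp add: nat_pow_mult)
    then show ?thesis using a pow_order_eq_1 by simp
  qed
  have sq: "a \<otimes> a = a [^] (2::nat)" if a: "a \<in> carrier G" for a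
    using a by (simp add: numeral_2_eq_2)
  have sumsq: "(\<Sum>g\<in>carrier G. \<sigma> (g \<otimes> g)) = (\<Sum>g\<in>carrier G. \<sigma> g)"
  proof (rule sum.reindex_bij_witness[where i = "\<lambda>b. b [^] k" and j = "\<lambda>a. a \<otimes> a"])
    show "(a \<otimes> a) [^] k = a" if "a \<in> carrier G" for a
      using that sq pk by (simp add: nat_pow_pow)
    show "b [^] k \<otimes> b [^] k = b" if "b \<in> carrier G" for b
      using that pk by (simp add: nat_pow_mult mult_2[symmetric])
  qed auto
  define S where "S = (\<Sum>g\<in>carrier G. \<sigma> g)"
  have lS: "\<sigma> h ** S = S" if h: "h \<in> carrier G" for h
  proof -
    have "\<sigma> h ** S = (\<Sum>g\<in>carrier G. \<sigma> (h \<otimes> g))"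
      unfolding S_def msum_right using h by (intro sum.cong) (auto simp: smult)
    also have "\<dots> = S" unfolding S_def by (rule sum_lmult[OF h])
    finally show ?thesis .
  qed
  have rS: "S ** \<sigma> h = S" if h: "h \<in> carrier G" for h
  proof -
    have "S ** \<sigma> h = (\<Sum>g\<in>carrier G. \<sigma> (g \<otimes> h))"
      unfolding S_def msum_left using h by (intro sum.cong) (auto simp: smult)
    also have "\<dots> = S" unfolding S_def by (rule sum_rmult[OF h])
    finally show ?thesis .
  qed
  obtain c where c: "S = c *\<^sub>R mat 1" using schur lS rS by metis
  obtain h0 where h0: "h0 \<in> carrier G" "\<sigma> h0 \<noteq> mat 1" using nontriv unfolding nontrivial_rep_def by blast
  have "c *\<^sub>R \<sigma> h0 = c *\<^sub>R mat 1" using lS[OF h0(1)] c by (simp add: matrix_scalar_ac)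
  then have "c = 0" using h0(2) by simp
  then have "S = 0" using c by simp
  have "trace (\<Sum>g\<in>carrier G. \<sigma> g ** \<sigma> g) = trace S"
    unfolding S_def sumsq[symmetric] by (intro arg_cong[where f = trace] sum.cong) (auto simp: smult)
  then have "NN = 0" using fs_identity \<open>S = 0\<close> by (simp add: trace_def)
  then show False using order_pos by simp
qed

lemma neg_eigen: "\<exists>t\<in>carrier G. \<exists>w. w \<noteq> 0 \<and> \<sigma> t *v w = - w"
proof -
  obtain t where t: "t \<in> carrier G" "t \<noteq> \<one>" "t \<otimes> t = \<one>" using involution_exists by blast
  have "\<sigma> t ** \<sigma> t = mat 1" using t smult sone by metis
  moreover have "\<sigma> t \<noteq> mat 1" using t sone sinj one_closed unfolding inj_on_def by metis
  ultimately show ?thesis using eig_neg_one_of_involution t(1) by blast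
qed

end


lemma card2_sq:
  fixes A (structure)
  assumes "group A" "subgroup C A" "card C = 2" "c \<in> C"
  shows "c \<otimes> c = \<one>"
proof (rule ccontr)
  interpret group A by fact
  assume ne: "c \<otimes> c \<noteq> \<one>"
  have finC: "finite C" using assms(3) card.infinite by fastforce
  have one: "\<one> \<in> C" using subgroup.one_closed[OF assms(2)] .
  have cG: "c \<in> carrier A" using assms(4) subgroup.subset[OF assms(2)] by blast
  have c1: "c \<noteq> \<one>" using ne cG by auto
  have "{\<one>, c} \<subseteq> C" using one assms(4) by auto
  moreover have "card {\<one>, c} = card C" using assms(3) c1 by simp
  ultimately have Ceq: "{\<one>, c} = C" using finC card_subset_eq by metis
  have "c \<otimes> c \<in> C" using subgroup.m_closed[OF assms(2) assms(4) assms(4)] .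
  then have "c \<otimes> c = c" using Ceq ne by auto
  then have "c \<otimes> c = c \<otimes> \<one>" using cG by simp
  then have "c = \<one>" using cG l_cancel[of c c \<one>] by simp
  then show False using c1 by simp
qed

lemma main_prop:
  fixes G :: "('g, 'b) monoid_scheme" (structure)
    and \<sigma> :: "'g \<Rightarrow> real^'n^'n" and m :: "real^'n^'n"
  assumes simple: "simple_group G" and fin: "finite (carrier G)"
    and split: "split_extension_by_order (AutoGroup G) (Inn G) 2"
    and oddn: "odd CARD('n)" and irr: "irreducible_rep G \<sigma>" and nontriv: "nontrivial_rep G \<sigma>"
    and norm: "in_GL_normalizer G \<sigma> m" and fo: "finite_order_mat m"
  shows "\<exists>k\<in>carrier G. has_eigenvalue_one (\<sigma> k ** m)"
proof -
  interpret fsctx G \<sigma>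
    using simple fin oddn irr nontriv by (simp add: fsctx_def fsctx_axioms_def simple_group_def)
  define mi where "mi = matrix_inv m"
  have minv: "m ** mi = mat 1" "mi ** m = mat 1"
    using matrix_inv_both[of m] norm unfolding mi_def in_GL_normalizer_def by auto
  have img: "(\<lambda>a. m ** a ** mi) ` (\<sigma> ` carrier G) = \<sigma> ` carrier G"
    using norm unfolding in_GL_normalizer_def mi_def by simp
  define \<alpha> where "\<alpha> = (\<lambda>x\<in>carrier G. SOME y. y \<in> carrier G \<and> \<sigma> y = m ** \<sigma> x ** mi)"
  have \<alpha>: "\<alpha> x \<in> carrier G \<and> \<sigma> (\<alpha> x) = m ** \<sigma> x ** mi" if x: "x \<in> carrier G" for x
  proof -
    have "m ** \<sigma> x ** mi \<in> \<sigma> ` carrier G" using img x by blast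
    then have "\<exists>y. y \<in> carrier G \<and> \<sigma> y = m ** \<sigma> x ** mi" by auto
    then have "(SOME y. y \<in> carrier G \<and> \<sigma> y = m ** \<sigma> x ** mi) \<in> carrier G \<and>
       \<sigma> (SOME y. y \<in> carrier G \<and> \<sigma> y = m ** \<sigma> x ** mi) = m ** \<sigma> x ** mi" by (rule someI_ex)
    then show ?thesis unfolding \<alpha>_def using x by simp
  qed
  have conj_inj: "A = B" if "m ** A ** mi = m ** B ** mi" for A B :: "real^'n^'n"
  proof -
    have "mi ** (m ** A ** mi) ** m = mi ** (m ** B ** mi) ** m" using that by simp
    moreover have "mi ** (m ** C ** mi) ** m = (mi ** m) ** C ** (mi ** m)" for C :: "real^'n^'n"
      by (simp add: matrix_mul_assoc)
    ultimately show ?thesis using minv by simp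
  qed
  have \<alpha>_hom: "\<alpha> \<in> hom G G"
  proof (rule homI)
    show "\<alpha> x \<in> carrier G" if "x \<in> carrier G" for x using \<alpha>[OF that] by simp
    show "\<alpha> (x \<otimes> y) = \<alpha> x \<otimes> \<alpha> y" if x: "x \<in> carrier G" and y: "y \<in> carrier G" for x y
    proof -
      have "\<sigma> (\<alpha> (x \<otimes> y)) = m ** \<sigma> x ** \<sigma> y ** mi" using \<alpha>[of "x \<otimes> y"] x y by (simp add: smult matrix_mul_assoc)
      also have "\<dots> = m ** \<sigma> x ** (mi ** m) ** \<sigma> y ** mi" using minv by simp
      also have "\<dots> = (m ** \<sigma> x ** mi) ** (m ** \<sigma> y ** mi)" by (simp add: matrix_mul_assoc)
      also have "\<dots> = \<sigma> (\<alpha> x \<otimes> \<alpha> y)" using \<alpha>[OF x] \<alpha>[OF y] by (simp add: smult)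
      finally show ?thesis using sinj \<alpha>[OF x] \<alpha>[OF y] \<alpha>[of "x \<otimes> y"] x y unfolding inj_on_def by auto
    qed
  qed
  have \<alpha>_inj: "inj_on \<alpha> (carrier G)"
  proof (rule inj_onI)
    fix x y assume x: "x \<in> carrier G" and y: "y \<in> carrier G" and e: "\<alpha> x = \<alpha> y"
    have "m ** \<sigma> x ** mi = m ** \<sigma> y ** mi" using \<alpha>[OF x] \<alpha>[OF y] e by simp
    then have "\<sigma> x = \<sigma> y" by (rule conj_inj)
    then show "x = y" using sinj x y unfolding inj_on_def by blast
  qed
  have \<alpha>_surj: "\<alpha> ` carrier G = carrier G"
  proof
    show "\<alpha> ` carrier G \<subseteq> carrier G" using \<alpha> by auto
    show "carrier G \<subseteq> \<alpha> ` carrier G"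
    proof
      fix y assume y: "y \<in> carrier G"
      then have "\<sigma> y \<in> (\<lambda>a. m ** a ** mi) ` (\<sigma> ` carrier G)" using img by blast
      then obtain x where x: "x \<in> carrier G" "\<sigma> y = m ** \<sigma> x ** mi" by auto
      then have "\<sigma> (\<alpha> x) = \<sigma> y" using \<alpha>[OF x(1)] by simp
      then have "\<alpha> x = y" using sinj \<alpha>[OF x(1)] y unfolding inj_on_def by blast
      then show "y \<in> \<alpha> ` carrier G" using x by blast
    qed
  qed
  have \<alpha>_auto: "\<alpha> \<in> carrier (AutoGroup G)"
    unfolding AutoGroup_def BijGroup_def auto_def Bij_def
    using \<alpha>_hom \<alpha>_inj \<alpha>_surj by (auto simp: \<alpha>_def bij_betw_def)
  obtain C where C: "subgroup C (AutoGroup G)" "card C = 2"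
    and NC: "Inn G <#>\<^bsub>AutoGroup G\<^esub> C = carrier (AutoGroup G)" and nrm: "Inn G \<lhd> AutoGroup G"
    using split unfolding split_extension_by_order_def by blast
  obtain \<iota> c where \<iota>: "\<iota> \<in> Inn G" and c: "c \<in> C" and \<alpha>eq: "\<alpha> = \<iota> \<otimes>\<^bsub>AutoGroup G\<^esub> c"
  proof -
    have "\<alpha> \<in> (\<Union>h\<in>Inn G. \<Union>k\<in>C. {h \<otimes>\<^bsub>AutoGroup G\<^esub> k})"
      using \<alpha>_auto NC unfolding set_mult_def by simp
    then show ?thesis using that by blast
  qed
  obtain h where h: "h \<in> carrier G" and \<iota>eq: "\<iota> = (\<lambda>x\<in>carrier G. h \<otimes> x \<otimes> inv h)"
    using \<iota> unfolding Inn_def by auto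
  have AG: "group (AutoGroup G)" by (rule AutoGroup)
  have carA: "carrier (AutoGroup G) = auto G" unfolding AutoGroup_def BijGroup_def by simp
  have \<iota>B: "\<iota> \<in> Bij (carrier G)" using \<iota> normal.axioms(1)[OF nrm] subgroup.subset carA
    unfolding auto_def by blast
  have cB: "c \<in> Bij (carrier G)" using c C(1) subgroup.subset carA unfolding auto_def by blast
  have multA: "f \<otimes>\<^bsub>AutoGroup G\<^esub> g = compose (carrier G) f g" if "f \<in> Bij (carrier G)" "g \<in> Bij (carrier G)" for f g
    using that unfolding AutoGroup_def BijGroup_def by simp
  have cG: "c x \<in> carrier G" if "x \<in> carrier G" for x
    using cB that unfolding Bij_def bij_betw_def by auto
  have \<alpha>x: "\<alpha> x = h \<otimes> c x \<otimes> inv h" if x: "x \<in> carrier G" for x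
  proof -
    have "\<alpha> x = compose (carrier G) \<iota> c x" using \<alpha>eq multA[OF \<iota>B cB] by simp
    also have "\<dots> = \<iota> (c x)" using x by (simp add: compose_eq)
    finally show ?thesis using cG[OF x] \<iota>eq by simp
  qed
  have cc: "c (c x) = x" if x: "x \<in> carrier G" for x
  proof -
    have "c \<otimes>\<^bsub>AutoGroup G\<^esub> c = \<one>\<^bsub>AutoGroup G\<^esub>" by (rule card2_sq[OF AG C(1) C(2) c])
    then have "compose (carrier G) c c x = (\<lambda>x\<in>carrier G. x) x"
      unfolding multA[OF cB cB] by (simp add: AutoGroup_def BijGroup_def)
    then show ?thesis using x by (simp add: compose_eq)
  qed
  define m' where "m' = \<sigma> (inv h) ** m"
  have rel: "m' ** \<sigma> x = \<sigma> (c x) ** m'" if x: "x \<in> carrier G" for x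
  proof -
    have "m ** \<sigma> x = m ** \<sigma> x ** (mi ** m)" using minv by simp
    also have "\<dots> = (m ** \<sigma> x ** mi) ** m" by (simp add: matrix_mul_assoc)
    also have "\<dots> = \<sigma> h ** \<sigma> (c x) ** \<sigma> (inv h) ** m"
      using \<alpha>[OF x] \<alpha>x[OF x] h cG[OF x] by (simp add: smult)
    finally have "\<sigma> (inv h) ** (m ** \<sigma> x) = \<sigma> (inv h) ** (\<sigma> h ** \<sigma> (c x) ** \<sigma> (inv h) ** m)" by simp
    also have "\<dots> = (\<sigma> (inv h) ** \<sigma> h) ** \<sigma> (c x) ** \<sigma> (inv h) ** m" by (simp add: matrix_mul_assoc)
    finally show ?thesis unfolding m'_def using sinv(2)[OF h] by (simp add: matrix_mul_assoc)
  qed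
  have comm2: "(m' ** m') ** \<sigma> x = \<sigma> x ** (m' ** m')" if x: "x \<in> carrier G" for x
  proof -
    have "(m' ** m') ** \<sigma> x = m' ** (m' ** \<sigma> x)" by (simp add: matrix_mul_assoc)
    also have "\<dots> = (m' ** \<sigma> (c x)) ** m'" using rel[OF x] by (simp add: matrix_mul_assoc)
    also have "\<dots> = \<sigma> (c (c x)) ** m' ** m'" using rel[OF cG[OF x]] by simp
    finally show ?thesis using cc[OF x] by (simp add: matrix_mul_assoc)
  qed
  obtain lam0 where lam: "m' ** m' = lam0 *\<^sub>R mat 1" using schur comm2 by blast
  have dm: "\<bar>det m\<bar> = 1" using fo abs_det_one_of_pow unfolding finite_order_mat_def by blast
  have dh: "\<bar>det (\<sigma> (inv h))\<bar> = 1" using rep_abs_det[OF is_group fin rep] h by simp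
  have "\<bar>det m'\<bar> = 1" unfolding m'_def using dm dh by (simp add: det_mul abs_mult)
  then have "\<bar>det m'\<bar> * \<bar>det m'\<bar> = 1" by simp
  then have "det (m' ** m') = 1" by (simp add: det_mul abs_mult_self_eq)
  then have l1: "lam0 ^ CARD('n) = 1" using lam det_scaleR_real[of lam0 "mat 1 :: real^'n^'n"] by simp
  then have "\<bar>lam0\<bar> ^ CARD('n) = 1 ^ CARD('n)" by (metis power_abs abs_one power_one)
  then have "\<bar>lam0\<bar> = 1" by (rule power_eq_imp_eq_base) auto
  then have "lam0 = 1 \<or> lam0 = -1" by auto
  moreover have "lam0 \<noteq> -1"
  proof
    assume "lam0 = -1"
    then have "lam0 ^ CARD('n) = -1" using oddn by simp
    then show False using l1 by simp
  qed
  ultimately have "lam0 = 1" by blast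
  then have msq: "m' ** m' = mat 1" using lam by simp
  show ?thesis
  proof (cases "m' = (-1) *\<^sub>R mat 1")
    case False
    obtain w where w: "w \<noteq> 0" "m' *v w = w" using eig_one_of_involution[OF msq False] by blast
    have "has_eigenvalue_one (\<sigma> (inv h) ** m)" unfolding has_eigenvalue_one_def using w m'_def by auto
    then show ?thesis using h by blast
  next
    case True
    obtain t w where t: "t \<in> carrier G" and w: "w \<noteq> 0" "\<sigma> t *v w = - w" using neg_eigen by blast
    have "\<sigma> (t \<otimes> inv h) ** m = \<sigma> t ** m'" using t h unfolding m'_def by (simp add: smult matrix_mul_assoc)
    then have "(\<sigma> (t \<otimes> inv h) ** m) *v w = \<sigma> t *v (m' *v w)" by (simp add: matrix_vector_mul_assoc)
    also have "m' *v w = - w" using True by (simp add: neg_mat_vec)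
    also have "\<sigma> t *v (- w) = w" using w(2) by (metis add.inverse_inverse matrix_vector_mult_diff_distrib diff_0 matrix_vector_mult_0_right)
    finally have "has_eigenvalue_one (\<sigma> (t \<otimes> inv h) ** m)" unfolding has_eigenvalue_one_def using w(1) by blast
    then show ?thesis using t h by blast
  qed
qed


theorem lemma4p4p2:
  fixes G :: "('g, 'b) monoid_scheme"
  assumes "simple_group G"
    and "finite (carrier G)"
    and "\<not> comm_group G"
    and "split_extension_by_order (AutoGroup G) (Inn G) 2"
  shows "eigenvalue_one_property_dim TYPE('n::finite) G"
  unfolding eigenvalue_one_property_dim_def
  using main_prop[OF assms(1,2,4)] by blast

end
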